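(* For all integers $L\ge 0$ and $n\ge 1$, $$S_L(n+3,n)=\frac{n(n+1)(n+2)(n+3)}{3\cdot 2^4}\left[\frac{(n+3)!}{3}\right]^{L}\left(n^2\left(\frac{3}{8}\right)^{L}+n\left(\frac{1}{4^{L-1}}-\frac{3^{L+1}}{8^L}\right)+\frac{2+2\cdot 3^L}{8^L}-\frac{1}{4^{L-1}}\right).$$ In particular, $S_0(n+3,n)=\frac{1}{48}n^2(n+1)^2(n+2)(n+3)$.
   Context: For an integer $L\ge 0$ let ${}_0F_L(z)=\sum_{n=0}^{\infty}\frac{z^n}{(n!)^{L+1}}$. Define the numbers $S_L(n,l)$ ($n,l\ge 0$) by the formal power series identities $\frac{({}_0F_L(z)-1)^l}{l!}=\sum_{n\ge l}\frac{S_L(n,l)}{(n!)^{L+1}}z^n$ for each $l\ge 0$. In particular $S_0(n,l)$ are the Stirling numbers of the second kind. *)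

theory Defs
  imports "HOL-Computational_Algebra.Formal_Power_Series"
begin

definition hyp0F :: "nat \<Rightarrow> real fps" where
  "hyp0F L = Abs_fps (\<lambda>n. 1 / (fact n) ^ (L + 1))"

text \<open>S_L(n,l) defined by (0F_L(z) - 1)^l / l! = sum_n S_L(n,l) z^n / (n!)^(L+1).\<close>
definition S :: "nat \<Rightarrow> nat \<Rightarrow> nat \<Rightarrow> real" where
  "S L n l = fps_nth (fps_const (1 / fact l) * (hyp0F L - 1) ^ l) n * (fact n) ^ (L + 1)"

end

theory Submission
  imports Defs
begin

lemma pow_coeffs:
  fixes H :: "real fps"
  assumes h0: "(fps_nth H 0) = 1"
  shows "(fps_nth (H ^ n) 0) = 1 \<and> (fps_nth (H ^ n) 1) = real n * (fps_nth H 1)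
    \<and> (fps_nth (H ^ n) 2) = real n * (real n - 1) / 2 * ((fps_nth H 1))^2 + real n * (fps_nth H 2)
    \<and> (fps_nth (H ^ n) 3) = real n * (fps_nth H 3) + real n * (real n - 1) * (fps_nth H 1) * (fps_nth H 2)
         + real n * (real n - 1) * (real n - 2) / 6 * ((fps_nth H 1))^3"
proof (induction n)
  case 0
  then show ?case by simp
next
  case (Suc n)
  have e: "\<And>k. (fps_nth (H ^ Suc n) k) = (\<Sum>i=0..k. (fps_nth H i) * (fps_nth (H^n) (k - i)))"
    by (simp add: fps_mult_nth)
  have s3: "{0..3::nat} = {0,1,2,3}" and s2: "{0..2::nat} = {0,1,2}" by auto
  show ?case
    using Suc.IH h0
    apply (simp only: e s3 s2)
    apply (simp add: atLeast0AtMost)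
    apply (simp add: algebra_simps power2_eq_square power3_eq_cube)
    apply (simp add: field_simps power2_eq_square power3_eq_cube)
    done
qed

definition Hs :: "nat \<Rightarrow> real fps" where
  "Hs L = Abs_fps (\<lambda>k. 1 / (fact (k+1)) ^ (L + 1))"

lemma hyp_split: "hyp0F L - 1 = fps_X * Hs L"
proof (rule fps_ext)
  fix m show "fps_nth (hyp0F L - 1) m = fps_nth (fps_X * Hs L) m"
    by (cases m) (simp_all add: hyp0F_def Hs_def)
qed

lemma S_eq: "S L (n + 3) n = ((fps_nth (Hs L ^ n) 3)) / fact n * (fact (n + 3)) ^ (L + 1)"
proof -
  have "(hyp0F L - 1) ^ n = fps_X ^ n * Hs L ^ n"
    by (simp add: hyp_split power_mult_distrib)
  then show ?thesis
    by (simp add: S_def fps_X_power_mult_nth)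
qed

lemma mainL:
  fixes L n :: nat
  assumes "n \<ge> 1"
  shows "S L (n + 3) n =
      real (n * (n + 1) * (n + 2) * (n + 3)) / (3 * 2 ^ 4) * (fact (n + 3) / 3) ^ L *
      ( (real n)\<^sup>2 * (3 / 8) ^ L
        + real n * (1 / (4::real) powi (int L - 1) - 3 ^ (L + 1) / 8 ^ L)
        + (2 + 2 * 3 ^ L) / 8 ^ L - 1 / (4::real) powi (int L - 1))"
proof -
  have h0: "fps_nth (Hs L) 0 = 1" by (simp add: Hs_def)
  note pc = pow_coeffs[OF h0, of n]
  have b1: "fps_nth (Hs L) 1 = 1 / 2 ^ (L+1)" by (simp add: Hs_def)
  have b2: "fps_nth (Hs L) 2 = 1 / 6 ^ (L+1)"
    by (simp add: Hs_def fact_numeral)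
  have b3: "fps_nth (Hs L) 3 = 1 / 24 ^ (L+1)"
    by (simp add: Hs_def fact_numeral)
  define P :: real where "P = (real n + 1) * (real n + 2) * (real n + 3)"
  define a :: real where "a = 3 ^ L"
  define c :: real where "c = 2 ^ L"
  have apos: "a > 0" and cpos: "c > 0" by (simp_all add: a_def c_def)
  have Ppos: "P > 0" unfolding P_def by simp
  have fpos: "(fact n :: real) > 0" by simp
  have f3: "(fact (n + 3) :: real) = fact n * P"
    by (simp add: P_def fact_Suc numeral_3_eq_3 algebra_simps)
  have p4: "(4::real) powi (int L - 1) = c^2 / 4"
  proof -
    have "(4::real) powi (int L - 1) = 4 powi int L / 4"
      by (simp add: power_int_diff)
    also have "4 powi int L = (4::real) ^ L" by (simp add: power_int_def)
    also have "(4::real) ^ L = c^2" by (simp add: c_def power2_eq_square flip: power_mult_distrib)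
    finally show ?thesis .
  qed
  have e8: "(8::real) ^ L = c^3" by (simp add: c_def power3_eq_cube flip: power_mult_distrib)
  have e38: "((3::real)/8) ^ L = a / c^3" by (simp add: a_def e8[symmetric] power_divide)
  have e6: "(6::real) ^ L = a * c" by (simp add: a_def c_def power_mult_distrib[symmetric])
  have e24: "(24::real) ^ L = a * c^3"
    by (simp add: e8[symmetric] a_def power_mult_distrib[symmetric])
  have e2: "(2::real) ^ L = c" by (simp add: c_def)
  have eP: "(fact n * P / 3) ^ L = fact n ^ L * P ^ L / a"
    by (simp add: a_def power_mult_distrib power_divide)
  have lhs: "S L (n + 3) n = fact n ^ L * P ^ L * P * real n *
      (2 + 4 * (real n - 1) * c + a * (real n - 1) * (real n - 2)) / (48 * a * c^3)"
    using apos cpos fpos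
    apply (simp only: S_eq pc b1 b2 b3 f3 power_add power_one_right power_mult_distrib power_divide e2 e6 e24)
    apply (simp add: field_simps power2_eq_square power3_eq_cube)
    done
  have rhs: "real (n * (n + 1) * (n + 2) * (n + 3)) / (3 * 2 ^ 4) * (fact (n + 3) / 3) ^ L *
      ( (real n)\<^sup>2 * (3 / 8) ^ L
        + real n * (1 / (4::real) powi (int L - 1) - 3 ^ (L + 1) / 8 ^ L)
        + (2 + 2 * 3 ^ L) / 8 ^ L - 1 / (4::real) powi (int L - 1))
      = fact n ^ L * P ^ L * P * real n *
      (2 + 4 * (real n - 1) * c + a * (real n - 1) * (real n - 2)) / (48 * a * c^3)"
  proof -
    have r: "real (n * (n + 1) * (n + 2) * (n + 3)) = real n * P" by (simp add: P_def algebra_simps)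
    have t: "(3::real) ^ (L+1) = 3 * a" by (simp add: a_def)
    show ?thesis
      using apos cpos fpos
      apply (simp only: r f3 eP p4 e38 e8 t flip: a_def)
      apply (simp add: field_simps power2_eq_square power3_eq_cube)
      done
  qed
  show ?thesis using lhs rhs by simp
qed

theorem mainTheorem6:
  fixes L n :: nat
  assumes "n \<ge> 1"
  shows "S L (n + 3) n =
      real (n * (n + 1) * (n + 2) * (n + 3)) / (3 * 2 ^ 4) * (fact (n + 3) / 3) ^ L *
      ( (real n)\<^sup>2 * (3 / 8) ^ L
        + real n * (1 / (4::real) powi (int L - 1) - 3 ^ (L + 1) / 8 ^ L)
        + (2 + 2 * 3 ^ L) / 8 ^ L - 1 / (4::real) powi (int L - 1))
    \<and> S 0 (n + 3) n = (1 / 48) * (real n)\<^sup>2 * (real n + 1)\<^sup>2 * (real n + 2) * (real n + 3)"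
proof
  show "S L (n + 3) n =
      real (n * (n + 1) * (n + 2) * (n + 3)) / (3 * 2 ^ 4) * (fact (n + 3) / 3) ^ L *
      ( (real n)\<^sup>2 * (3 / 8) ^ L
        + real n * (1 / (4::real) powi (int L - 1) - 3 ^ (L + 1) / 8 ^ L)
        + (2 + 2 * 3 ^ L) / 8 ^ L - 1 / (4::real) powi (int L - 1))" by (rule mainL[OF assms])
  have "S 0 (n + 3) n = real (n * (n + 1) * (n + 2) * (n + 3)) / (3 * 2 ^ 4) * (fact (n + 3) / 3) ^ 0 *
      ( (real n)\<^sup>2 * (3 / 8) ^ 0
        + real n * (1 / (4::real) powi (int 0 - 1) - 3 ^ (0 + 1) / 8 ^ 0)
        + (2 + 2 * 3 ^ 0) / 8 ^ 0 - 1 / (4::real) powi (int 0 - 1))"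
    by (rule mainL[OF assms])
  also have "\<dots> = (1 / 48) * (real n)\<^sup>2 * (real n + 1)\<^sup>2 * (real n + 2) * (real n + 3)"
    by (simp add: power_int_def field_simps power2_eq_square)
  finally show "S 0 (n + 3) n = (1 / 48) * (real n)\<^sup>2 * (real n + 1)\<^sup>2 * (real n + 2) * (real n + 3)" .
qed

end
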